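(* Let $-1\le i\le N$. Suppose $\Delta^i-k^2$ and $\Delta^{i+1}-k^2$ are elliptic of order two on $\mathcal X'$ and satisfy the uniqueness condition for the local Cauchy problem on $\mathcal X'$, and let $G^i$ and $G^{i+1}$ be left fundamental solutions of $\Delta^i-k^2$ and $\Delta^{i+1}-k^2$ on $\mathcal X'$ (classical pseudodifferential operators of order $-2$ on sections of $F^i$, resp. $F^{i+1}$). Then the pseudodifferential operator $$\Phi^i=\begin{pmatrix}G^i\bigl(\imath k+\frac1{\imath k}A^{i-1}A^{i-1*}\bigr) & G^iA^{i*}\\ G^{i+1}A^i & G^{i+1}\bigl(-\imath k-\frac1{\imath k}A^{i+1*}A^{i+1}\bigr)\end{pmatrix}$$ is a left fundamental solution of $M^i$ on $\mathcal X'$, i.e. $\Phi^iM^iw=w$ for every smooth compactly supported section $w$ of $F^i\oplus F^{i+1}$.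
   Context: Let $\mathcal X'$ be a $C^\infty$ manifold with a smooth positive volume form. Let $F^0,\dots,F^N$ be smooth complex vector bundles over $\mathcal X'$ with Hermitian metrics, $F^j=0$ for $j\notin\{0,\dots,N\}$, and let $A^j:C^\infty(\mathcal X',F^j)\to C^\infty(\mathcal X',F^{j+1})$ be first order differential operators (zero when $F^j$ or $F^{j+1}$ is zero) with $A^{j+1}A^j=0$. $A^{j*}$ is the formal adjoint of $A^j$ with respect to the $L^2$ inner products given by the metrics and volume form; $\Delta^j=A^{j*}A^j+A^{j-1}A^{j-1*}$. Let $k\neq0$ be a complex number with $\Im k\ge0$ and $\imath$ the imaginary unit. The Maxwell operator at step $i$ is $M^i=\begin{pmatrix}\imath k & A^{i*}\\ A^i&-\imath k\end{pmatrix}$ on sections of $F^i\oplus F^{i+1}$. A left fundamental solution of a differential operator $P$ is an operator $G$ with $GPw=w$ for all smooth compactly supported sections $w$. *)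

theory Defs
  imports Main "HOL-Analysis.Analysis"
begin

text \<open>The type 's is an ambient complex vector space
(scalar multiplication sc) containing, for every degree j, the subspace Cc j of smooth
compactly supported sections of F^j. ip j is the L2 inner product on Cc j.\<close>

definition csubspace_on :: "(complex \<Rightarrow> 's::ab_group_add \<Rightarrow> 's) \<Rightarrow> 's set \<Rightarrow> bool" where
  "csubspace_on sc S \<longleftrightarrow> 0 \<in> S \<and> (\<forall>x\<in>S. \<forall>y\<in>S. x + y \<in> S) \<and> (\<forall>c. \<forall>x\<in>S. sc c x \<in> S)"

definition herm_ip_on ::
  "(complex \<Rightarrow> 's::ab_group_add \<Rightarrow> 's) \<Rightarrow> 's set \<Rightarrow> ('s \<Rightarrow> 's \<Rightarrow> complex) \<Rightarrow> bool" where
  "herm_ip_on sc S ip \<longleftrightarrow>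
     (\<forall>x\<in>S. \<forall>y\<in>S. \<forall>z\<in>S. ip (x + y) z = ip x z + ip y z) \<and>
     (\<forall>c. \<forall>x\<in>S. \<forall>y\<in>S. ip (sc c x) y = c * ip x y) \<and>
     (\<forall>x\<in>S. \<forall>y\<in>S. ip y x = cnj (ip x y)) \<and>
     (\<forall>x\<in>S. x \<noteq> 0 \<longrightarrow> Im (ip x x) = 0 \<and> Re (ip x x) > 0)"

definition Lap :: "(int \<Rightarrow> 's::ab_group_add \<Rightarrow> 's) \<Rightarrow> (int \<Rightarrow> 's \<Rightarrow> 's) \<Rightarrow> int \<Rightarrow> 's \<Rightarrow> 's" where
  "Lap A Astar j w = Astar j (A j w) + A (j - 1) (Astar (j - 1) w)"

definition Maxwell ::
  "(complex \<Rightarrow> 's::ab_group_add \<Rightarrow> 's) \<Rightarrow> (int \<Rightarrow> 's \<Rightarrow> 's) \<Rightarrow> (int \<Rightarrow> 's \<Rightarrow> 's) \<Rightarrow> complex \<Rightarrow> int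
    \<Rightarrow> 's \<times> 's \<Rightarrow> 's \<times> 's" where
  "Maxwell sc A Astar k i w =
     (sc (\<i> * k) (fst w) + Astar i (snd w), A i (fst w) + sc (- (\<i> * k)) (snd w))"

definition Phi ::
  "(complex \<Rightarrow> 's::ab_group_add \<Rightarrow> 's) \<Rightarrow> (int \<Rightarrow> 's \<Rightarrow> 's) \<Rightarrow> (int \<Rightarrow> 's \<Rightarrow> 's) \<Rightarrow> complex \<Rightarrow> int
    \<Rightarrow> ('s \<Rightarrow> 's) \<Rightarrow> ('s \<Rightarrow> 's) \<Rightarrow> 's \<times> 's \<Rightarrow> 's \<times> 's" where
  "Phi sc A Astar k i Gi Gi1 w =
     (Gi (sc (\<i> * k) (fst w) + sc (1 / (\<i> * k)) (A (i - 1) (Astar (i - 1) (fst w))))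
        + Gi (Astar i (snd w)),
      Gi1 (A i (fst w))
        + Gi1 (sc (- (\<i> * k)) (snd w) - sc (1 / (\<i> * k)) (Astar (i + 1) (A (i + 1) (snd w)))))"

end

theory Submission
  imports Defs
begin

theorem lemma2p1:
  fixes sc :: "complex \<Rightarrow> 's::ab_group_add \<Rightarrow> 's"
    and Cc :: "int \<Rightarrow> 's set"
    and ip :: "int \<Rightarrow> 's \<Rightarrow> 's \<Rightarrow> complex"
    and A Astar :: "int \<Rightarrow> 's \<Rightarrow> 's"
    and Gi Gi1 :: "'s \<Rightarrow> 's"
    and N :: nat and i :: int and k :: complex
  assumes vs: "vector_space sc"
    and sub: "\<forall>j. csubspace_on sc (Cc j)"
    and zero: "\<forall>j. j < 0 \<or> j > int N \<longrightarrow> Cc j = {0}"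
    and ipj: "\<forall>j. herm_ip_on sc (Cc j) (ip j)"
    and linA: "\<forall>j. Vector_Spaces.linear sc sc (A j)"
    and mapA: "\<forall>j. A j ` Cc j \<subseteq> Cc (j + 1)"
    and linAs: "\<forall>j. Vector_Spaces.linear sc sc (Astar j)"
    and mapAs: "\<forall>j. Astar j ` Cc (j + 1) \<subseteq> Cc j"
    and adj: "\<forall>j. \<forall>u\<in>Cc j. \<forall>v\<in>Cc (j + 1). ip (j + 1) (A j u) v = ip j u (Astar j v)"
    and cplx: "\<forall>j. \<forall>u\<in>Cc j. A (j + 1) (A j u) = 0"
    and k: "k \<noteq> 0" "Im k \<ge> 0"
    and i: "-1 \<le> i" "i \<le> int N"
    and linG: "Vector_Spaces.linear sc sc Gi" "Vector_Spaces.linear sc sc Gi1"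
    and Gi: "\<forall>w\<in>Cc i. Gi (Lap A Astar i w - sc (k^2) w) = w"
    and Gi1: "\<forall>w\<in>Cc (i + 1). Gi1 (Lap A Astar (i + 1) w - sc (k^2) w) = w"
  shows "\<forall>u\<in>Cc i. \<forall>v\<in>Cc (i + 1).
           Phi sc A Astar k i Gi Gi1 (Maxwell sc A Astar k i (u, v)) = (u, v)"
proof (intro ballI)
  fix u v assume u: "u \<in> Cc i" and v: "v \<in> Cc (i + 1)"
  interpret V: vector_space sc by (rule vs)
  have ladd: "\<And>f x y. Vector_Spaces.linear sc sc f \<Longrightarrow> f (x + y) = f x + f y"
    by (simp add: module_hom.add module_hom_iff_linear[symmetric])
  have lsc: "\<And>f c x. Vector_Spaces.linear sc sc f \<Longrightarrow> f (sc c x) = sc c (f x)"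
    by (simp add: module_hom.scale module_hom_iff_linear[symmetric])
  have ldiff: "\<And>f x y. Vector_Spaces.linear sc sc f \<Longrightarrow> f (x - y) = f x - f y"
    by (simp add: module_hom.diff module_hom_iff_linear[symmetric])
  have lneg: "\<And>f x. Vector_Spaces.linear sc sc f \<Longrightarrow> f (- x) = - f x"
    by (simp add: module_hom.neg module_hom_iff_linear[symmetric])
  have lzero: "\<And>f. Vector_Spaces.linear sc sc f \<Longrightarrow> f 0 = 0"
    by (simp add: module_hom.zero module_hom_iff_linear[symmetric])
  have k1: "Astar (i - 1) (Astar i v) = 0"
  proof -
    have v1: "Astar i v \<in> Cc i" using mapAs v by blast
    have x: "Astar (i - 1) (Astar i v) \<in> Cc (i - 1)" using mapAs v1 by (metis diff_add_cancel image_subset_iff)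
    define x where "x = Astar (i - 1) (Astar i v)"
    have xin: "x \<in> Cc (i - 1)" using x x_def by simp
    have ax: "A (i - 1) x \<in> Cc i" using mapA xin by (metis diff_add_cancel image_subset_iff)
    have "ip (i - 1) x x = cnj (ip (i - 1) x (Astar (i - 1) (Astar i v)))"
      using ipj xin x unfolding herm_ip_on_def x_def by metis
    also have "ip (i - 1) x (Astar (i - 1) (Astar i v)) = ip i (A (i - 1) x) (Astar i v)"
      using adj xin v1 by (metis diff_add_cancel)
    also have "\<dots> = ip (i + 1) (A i (A (i - 1) x)) v"
      using adj ax v by metis
    also have "A i (A (i - 1) x) = 0" using cplx xin by (metis diff_add_cancel)
    also have "ip (i + 1) 0 v = 0"
    proof -
      have z: "0 \<in> Cc (i+1)" using sub unfolding csubspace_on_def by blast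
      have "ip (i+1) (0 + 0) v = ip (i+1) 0 v + ip (i+1) 0 v"
        using ipj z v unfolding herm_ip_on_def by blast
      then show ?thesis by simp
    qed
    finally have "ip (i - 1) x x = 0" by simp
    moreover have "x \<noteq> 0 \<longrightarrow> Re (ip (i - 1) x x) > 0"
      using ipj xin unfolding herm_ip_on_def by blast
    ultimately have "x = 0" by auto
    then show ?thesis by (simp add: x_def)
  qed
  have k2: "A (i + 1) (A i u) = 0" using cplx u by blast
  have kk: "(\<i> * k) * (\<i> * k) = - (k^2)" by (simp add: power2_eq_square algebra_simps)
  have ki: "(1 / (\<i> * k)) * (\<i> * k) = 1" using k by simp
  have ki2: "(1 / (\<i> * k)) * (- (\<i> * k)) = -1" using k by simp
  have la: "\<And>j. Vector_Spaces.linear sc sc (A j)" using linA by blast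
  have las: "\<And>j. Vector_Spaces.linear sc sc (Astar j)" using linAs by blast
  have c1: "sc (\<i> * k) (sc (\<i> * k) u + Astar i v) + sc (1 / (\<i> * k)) (A (i - 1) (Astar (i - 1) (sc (\<i> * k) u + Astar i v)))
      + Astar i (A i u + sc (- (\<i> * k)) v) = Lap A Astar i u - sc (k^2) u"
    unfolding Lap_def
    by (simp add: ladd[OF la] lsc[OF la] ladd[OF las] lsc[OF las] k1 lzero[OF la] kk ki V.scale_right_distrib V.scale_minus_left ldiff[OF las] k(1))
  have c2: "A i (sc (\<i> * k) u + Astar i v) + (sc (- (\<i> * k)) (A i u + sc (- (\<i> * k)) v) - sc (1 / (\<i> * k)) (Astar (i + 1) (A (i + 1) (A i u + sc (- (\<i> * k)) v))))
      = Lap A Astar (i + 1) v - sc (k^2) v"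
    unfolding Lap_def
    by (simp add: ladd[OF la] lsc[OF la] ladd[OF las] lsc[OF las] k2 lzero[OF las] kk ki2 ldiff[OF la] k(1) lneg[OF las] V.scale_right_distrib V.scale_minus_left V.scale_right_diff_distrib)
  have g1: "Gi (Lap A Astar i u - sc (k^2) u) = u" using Gi u by blast
  have g2: "Gi1 (Lap A Astar (i + 1) v - sc (k^2) v) = v" using Gi1 v by blast
  show "Phi sc A Astar k i Gi Gi1 (Maxwell sc A Astar k i (u, v)) = (u, v)"
    unfolding Phi_def Maxwell_def fst_conv snd_conv
    unfolding ladd[OF linG(1), symmetric] ladd[OF linG(2), symmetric] c1 c2 g1 g2 ..
qed

end
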